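(* Let $K\ge1$, $N$ and $s$ be integers with $0\le s<N-2$, let $X_0,\dots,X_{K-1}\in\mathbb{R}$, let $f:\mathbb{R}\to\mathbb{R}$, let $\alpha_i=\cos\frac{(2i+1)\pi}{2K}$ for $i=0,\dots,K-1$, define $$u(z)=\sum_{i=0}^{K-1}\frac{(-1)^i/(z-\alpha_i)}{\sum_{j=0}^{K-1}(-1)^j/(z-\alpha_j)}X_i$$ (extended continuously by $u(\alpha_i)=X_i$), and let $g(z)=f(u(z))$, assumed to have a continuous second derivative on $[-1,1]$. Let $\mathcal{F}\subset\{0,\dots,N\}$ with $|\mathcal F|=N+1-s$, let $n=N-s$, let $z_0>\dots>z_n$ be the points $\{\cos\frac{j\pi}{N}:j\in\mathcal F\}$, and let $$r_{\mathcal F}(z)=\sum_{i=0}^{n}\frac{(-1)^i/(z-z_i)}{\sum_{j=0}^n(-1)^j/(z-z_j)}\,g(z_i).$$ Set $R=\frac{(s+1)(s+3)\pi^2}{4}$ and $\|h\|=\max_{z\in[-1,1]}|h(z)|$. Then $$\|r_{\mathcal F}-g\|\le 2(1+R)\sin\Big(\frac{(s+1)\pi}{2N}\Big)\|g''\|$$ if $N-s$ is odd, and $$\|r_{\mathcal F}-g\|\le 2(1+R)\sin\Big(\frac{(s+1)\pi}{2N}\Big)\big(\|g''\|+\|g'\|\big)$$ if $N-s$ is even.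
   Context: $\|h\|$ denotes the maximum norm of a function over $[-1,1]$. The interpolation points $z_j$ are a subset, of size $N+1-s$, of the Chebyshev points of the second kind $\cos\frac{k\pi}{N}$, $k=0,\dots,N$ (the $s$ missing points correspond to straggling workers). *)

theory Defs
  imports "HOL-Analysis.Analysis"
begin

definition berrut :: "(nat \<Rightarrow> real) \<Rightarrow> (nat \<Rightarrow> real) \<Rightarrow> nat \<Rightarrow> real \<Rightarrow> real" where
  "berrut x y n z =
     (if \<exists>i\<le>n. z = x i then y (LEAST i. i \<le> n \<and> z = x i)
      else (\<Sum>i\<le>n. ((-1)^i / (z - x i)) * y i) / (\<Sum>j\<le>n. (-1)^j / (z - x j)))"

definition cheb_alpha :: "nat \<Rightarrow> nat \<Rightarrow> real" where
  "cheb_alpha K i = cos ((2 * real i + 1) * pi / (2 * real K))"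

definition enc_u :: "nat \<Rightarrow> (nat \<Rightarrow> real) \<Rightarrow> real \<Rightarrow> real" where
  "enc_u K X = berrut (cheb_alpha K) X (K - 1)"

text \<open>The i-th surviving node z_i = cos(j_i pi / N), j_0 < j_1 < ... the elements of F,
  so that z_0 > z_1 > ... .\<close>
definition surv_node :: "nat \<Rightarrow> nat set \<Rightarrow> nat \<Rightarrow> real" where
  "surv_node N F i = cos (real (sorted_list_of_set F ! i) * pi / real N)"

definition dec_r :: "nat \<Rightarrow> nat \<Rightarrow> nat set \<Rightarrow> (real \<Rightarrow> real) \<Rightarrow> real \<Rightarrow> real" where
  "dec_r N s F g = berrut (surv_node N F) (\<lambda>i. g (surv_node N F i)) (N - s)"

definition supnorm :: "(real \<Rightarrow> real) \<Rightarrow> real" where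
  "supnorm h = (SUP z\<in>{-1..1}. \<bar>h z\<bar>)"

end

theory Submission
  imports Defs
begin


lemma mvt_real:
  fixes f f' :: "real \<Rightarrow> real"
  assumes "a \<le> b" "\<And>x. x \<in> {a..b} \<Longrightarrow> (f has_real_derivative f' x) (at x within {a..b})"
  shows "\<exists>\<xi>\<in>{a..b}. f b - f a = f' \<xi> * (b - a)"
proof -
  have "\<exists>\<xi>\<in>{a..b}. f b - f a = (\<lambda>h. f' \<xi> * h) (b - a)"
    by (rule mvt_very_simple[OF assms(1)]) (use assms(2) in \<open>auto simp: has_field_derivative_def\<close>)
  then show ?thesis by simp
qed

lemma nonpos_deriv_mono:
  fixes H H' :: "real \<Rightarrow> real"
  assumes "a \<le> b" "\<And>x. x \<in> {a..b} \<Longrightarrow> (H has_real_derivative H' x) (at x within {a..b})"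
    "\<And>x. x \<in> {a..b} \<Longrightarrow> H' x \<le> 0"
  shows "H b \<le> H a"
proof -
  obtain \<xi> where "\<xi> \<in> {a..b}" "H b - H a = H' \<xi> * (b - a)" using mvt_real[OF assms(1,2)] by blast
  moreover have "H' \<xi> * (b - a) \<le> 0" using assms(1) assms(3)[OF \<open>\<xi> \<in> _\<close>] by (simp add: mult_nonpos_nonneg)
  ultimately show ?thesis by linarith
qed

locale G =
  fixes g g1 g2 :: "real \<Rightarrow> real" and M1 M2 :: real
  assumes dg: "\<And>z. z \<in> {-1..1} \<Longrightarrow> (g has_real_derivative g1 z) (at z within {-1..1})"
    and dg1: "\<And>z. z \<in> {-1..1} \<Longrightarrow> (g1 has_real_derivative g2 z) (at z within {-1..1})"
    and bM1: "\<And>z. z \<in> {-1..1} \<Longrightarrow> \<bar>g1 z\<bar> \<le> M1"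
    and bM2: "\<And>z. z \<in> {-1..1} \<Longrightarrow> \<bar>g2 z\<bar> \<le> M2"
begin

lemma dg_sub: "t \<in> {a..b} \<Longrightarrow> {a..b} \<subseteq> {-1..1} \<Longrightarrow> (g has_real_derivative g1 t) (at t within {a..b})"
  using dg DERIV_subset by blast
lemma dg1_sub: "t \<in> {a..b} \<Longrightarrow> {a..b} \<subseteq> {-1..1} \<Longrightarrow> (g1 has_real_derivative g2 t) (at t within {a..b})"
  using dg1 DERIV_subset by blast

lemma lip_g1: assumes "t \<in> {-1..1}" "u \<in> {-1..1}" shows "\<bar>g1 u - g1 t\<bar> \<le> M2 * \<bar>u - t\<bar>"
proof -
  have *: "\<bar>g1 v - g1 w\<bar> \<le> M2 * (v - w)" if "w \<le> v" "w \<in> {-1..1}" "v \<in> {-1..1}" for v w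
  proof -
    have sub: "{w..v} \<subseteq> {-1..1}" using that by auto
    have "\<exists>\<xi>\<in>{w..v}. g1 v - g1 w = g2 \<xi> * (v - w)"
      by (rule mvt_real) (use that dg1_sub sub in auto)
    then obtain \<xi> where x: "\<xi> \<in> {w..v}" "g1 v - g1 w = g2 \<xi> * (v - w)" by blast
    have "\<bar>g2 \<xi>\<bar> \<le> M2" using bM2 x(1) sub by auto
    then show ?thesis using x(2) that(1) by (simp add: abs_mult mult_right_mono)
  qed
  show ?thesis
  proof (cases "t \<le> u")
    case True then show ?thesis using *[of t u] assms by simp
  next
    case False then show ?thesis using *[of u t] assms by (simp add: abs_minus_commute)
  qed
qed

lemma lip_g: assumes "t \<in> {-1..1}" "u \<in> {-1..1}" shows "\<bar>g u - g t\<bar> \<le> M1 * \<bar>u - t\<bar>"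
proof -
  have *: "\<bar>g v - g w\<bar> \<le> M1 * (v - w)" if "w \<le> v" "w \<in> {-1..1}" "v \<in> {-1..1}" for v w
  proof -
    have sub: "{w..v} \<subseteq> {-1..1}" using that by auto
    have "\<exists>\<xi>\<in>{w..v}. g v - g w = g1 \<xi> * (v - w)"
      by (rule mvt_real) (use that dg_sub sub in auto)
    then obtain \<xi> where x: "\<xi> \<in> {w..v}" "g v - g w = g1 \<xi> * (v - w)" by blast
    have "\<bar>g1 \<xi>\<bar> \<le> M1" using bM1 x(1) sub by auto
    then show ?thesis using x(2) that(1) by (simp add: abs_mult mult_right_mono)
  qed
  show ?thesis
  proof (cases "t \<le> u")
    case True then show ?thesis using *[of t u] assms by simp
  next
    case False then show ?thesis using *[of u t] assms by (simp add: abs_minus_commute)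
  qed
qed

lemma taylor2: assumes "t \<in> {-1..1}" "u \<in> {-1..1}"
  shows "\<bar>g u - g t - g1 t * (u - t)\<bar> \<le> M2 * (u - t)^2 / 2"
proof (cases "t \<le> u")
  case True
  have sub: "{t..u} \<subseteq> {-1..1}" using assms True by auto
  have L: "(\<lambda>v. g v - g1 t * v - M2 * (v - t)^2 / 2) u \<le> (\<lambda>v. g v - g1 t * v - M2 * (v - t)^2 / 2) t"
  proof (rule nonpos_deriv_mono[OF True])
    fix x assume x: "x \<in> {t..u}"
    show "((\<lambda>v. g v - g1 t * v - M2 * (v - t)^2 / 2) has_real_derivative (g1 x - g1 t - M2 * (x - t))) (at x within {t..u})"
      by (auto intro!: derivative_eq_intros dg_sub[OF x sub] simp: field_simps)
    show "g1 x - g1 t - M2 * (x - t) \<le> 0" using lip_g1[of t x] x sub by (auto simp: abs_le_iff algebra_simps)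
  qed
  have U: "(\<lambda>v. g v - g1 t * v + M2 * (v - t)^2 / 2) t \<le> (\<lambda>v. g v - g1 t * v + M2 * (v - t)^2 / 2) u"
  proof -
    have "(\<lambda>v. - (g v - g1 t * v + M2 * (v - t)^2 / 2)) u \<le> (\<lambda>v. - (g v - g1 t * v + M2 * (v - t)^2 / 2)) t"
    proof (rule nonpos_deriv_mono[OF True])
      fix x assume x: "x \<in> {t..u}"
      show "((\<lambda>v. - (g v - g1 t * v + M2 * (v - t)^2 / 2)) has_real_derivative (- (g1 x - g1 t + M2 * (x - t)))) (at x within {t..u})"
        by (auto intro!: derivative_eq_intros dg_sub[OF x sub] simp: field_simps)
      show "- (g1 x - g1 t + M2 * (x - t)) \<le> 0" using lip_g1[of t x] x sub by (auto simp: abs_le_iff algebra_simps)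
    qed
    then show ?thesis by simp
  qed
  show ?thesis using L U unfolding abs_le_iff by (simp add: power2_eq_square field_simps)
next
  case False
  then have F: "u \<le> t" by simp
  have sub: "{u..t} \<subseteq> {-1..1}" using assms F by auto
  have L: "(\<lambda>v. g v - g1 t * v + M2 * (v - t)^2 / 2) t \<le> (\<lambda>v. g v - g1 t * v + M2 * (v - t)^2 / 2) u"
  proof (rule nonpos_deriv_mono[OF F])
    fix x assume x: "x \<in> {u..t}"
    show "((\<lambda>v. g v - g1 t * v + M2 * (v - t)^2 / 2) has_real_derivative (g1 x - g1 t + M2 * (x - t))) (at x within {u..t})"
      by (auto intro!: derivative_eq_intros dg_sub[OF x sub] simp: field_simps)
    show "g1 x - g1 t + M2 * (x - t) \<le> 0" using lip_g1[of t x] x sub by (auto simp: abs_le_iff algebra_simps)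
  qed
  have U: "(\<lambda>v. g v - g1 t * v - M2 * (v - t)^2 / 2) u \<le> (\<lambda>v. g v - g1 t * v - M2 * (v - t)^2 / 2) t"
  proof -
    have "(\<lambda>v. - (g v - g1 t * v - M2 * (v - t)^2 / 2)) t \<le> (\<lambda>v. - (g v - g1 t * v - M2 * (v - t)^2 / 2)) u"
    proof (rule nonpos_deriv_mono[OF F])
      fix x assume x: "x \<in> {u..t}"
      show "((\<lambda>v. - (g v - g1 t * v - M2 * (v - t)^2 / 2)) has_real_derivative (- (g1 x - g1 t - M2 * (x - t)))) (at x within {u..t})"
        by (auto intro!: derivative_eq_intros dg_sub[OF x sub] simp: field_simps)
      show "- (g1 x - g1 t - M2 * (x - t)) \<le> 0" using lip_g1[of t x] x sub by (auto simp: abs_le_iff algebra_simps)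
    qed
    then show ?thesis by simp
  qed
  show ?thesis using L U unfolding abs_le_iff by (simp add: power2_eq_square field_simps)
qed


lemma phi_bound: assumes "t \<in> {-1..1}" "z \<in> {-1..1}" "t \<noteq> z"
  shows "\<bar>(g t - g z) / (t - z)\<bar> \<le> M1"
proof -
  have "\<bar>g t - g z\<bar> \<le> M1 * \<bar>t - z\<bar>" using lip_g[OF assms(2,1)] .
  moreover have "\<bar>t - z\<bar> > 0" using assms(3) by simp
  ultimately show ?thesis by (simp add: abs_divide divide_le_eq)
qed

lemma div_help: fixes X d M :: real assumes "d \<noteq> 0" "\<bar>X\<bar> \<le> M * d^2 / 2"
  shows "\<bar>X / d\<bar> \<le> M * \<bar>d\<bar> / 2"
proof -
  have e: "M * d^2 / 2 = (M * \<bar>d\<bar> / 2) * \<bar>d\<bar>" by (simp add: power2_eq_square abs_mult_self_eq)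
  have "\<bar>d\<bar> > 0" using assms(1) by simp
  then show ?thesis using assms(2) unfolding e by (simp add: abs_divide divide_le_eq)
qed

lemma pair_bound: assumes "a \<in> {-1..1}" "b \<in> {-1..1}" "z \<in> {-1..1}" "b < a" "z \<noteq> a" "z \<noteq> b"
  shows "\<bar>(g a - g z) / (a - z) - (g b - g z) / (b - z)\<bar> \<le> M2 / 2 * (a - b)"
proof (cases "b < z \<and> z < a")
  case True
  have ea: "\<bar>(g a - g z - g1 z * (a - z)) / (a - z)\<bar> \<le> M2 * \<bar>a - z\<bar> / 2"
    by (rule div_help) (use assms taylor2[of z a] in auto)
  have eb: "\<bar>(g b - g z - g1 z * (b - z)) / (b - z)\<bar> \<le> M2 * \<bar>b - z\<bar> / 2"
    by (rule div_help) (use assms taylor2[of z b] in auto)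
  have "(g a - g z) / (a - z) - (g b - g z) / (b - z)
      = (g a - g z - g1 z * (a - z)) / (a - z) - (g b - g z - g1 z * (b - z)) / (b - z)"
    using assms by (simp add: field_simps)
  also have "\<bar>\<dots>\<bar> \<le> M2 * \<bar>a - z\<bar> / 2 + M2 * \<bar>b - z\<bar> / 2"
    using ea eb by (meson abs_triangle_ineq4 add_mono order_trans)
  also have "\<dots> = M2 / 2 * (a - b)" using True by (simp add: field_simps)
  finally show ?thesis .
next
  case False
  then have out: "z \<notin> {b..a}" using assms by auto
  have sub: "{b..a} \<subseteq> {-1..1}" using assms by auto
  define \<phi>' where "\<phi>' x = (g1 x * (x - z) - (g x - g z) * 1) / ((x - z) * (x - z))" for x
  have der: "((\<lambda>v. (g v - g z) / (v - z)) has_real_derivative \<phi>' x) (at x within {b..a})"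
    if x: "x \<in> {b..a}" for x
  proof -
    have d1: "((\<lambda>v. g v - g z) has_real_derivative g1 x) (at x within {b..a})"
      by (auto intro!: derivative_eq_intros dg_sub[OF x sub])
    have d2: "((\<lambda>v. v - z) has_real_derivative 1) (at x within {b..a})"
      by (auto intro!: derivative_eq_intros)
    have "x - z \<noteq> 0" using x out by auto
    from DERIV_divide[OF d1 d2 this] show ?thesis unfolding \<phi>'_def .
  qed
  have bd: "\<bar>\<phi>' x\<bar> \<le> M2 / 2" if x: "x \<in> {b..a}" for x
  proof -
    have nz: "x - z \<noteq> 0" using x out by auto
    have "\<phi>' x = (g z - g x - g1 x * (z - x)) / (z - x)^2"
    proof -
      have "(x - z) * (x - z) = (z - x)^2" by (simp add: power2_eq_square algebra_simps)
      moreover have "g1 x * (x - z) - (g x - g z) * 1 = (g z - g x - g1 x * (z - x))"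
        by (simp add: algebra_simps)
      ultimately show ?thesis unfolding \<phi>'_def by metis
    qed
    moreover have "\<bar>g z - g x - g1 x * (z - x)\<bar> \<le> M2 * (z - x)^2 / 2"
      using taylor2[of x z] x sub assms(3) by auto
    moreover have "(z - x)^2 > 0" using nz by simp
    ultimately have e1: "\<bar>\<phi>' x\<bar> = \<bar>g z - g x - g1 x * (z - x)\<bar> / (z - x)^2"
      and e2: "\<bar>g z - g x - g1 x * (z - x)\<bar> \<le> M2 * (z - x)^2 / 2"
      and e3: "(z - x)^2 > 0"
      by (simp_all add: abs_divide)
    have "\<bar>\<phi>' x\<bar> \<le> (M2 * (z - x)^2 / 2) / (z - x)^2"
      unfolding e1 by (rule divide_right_mono[OF e2]) (use e3 in simp)
    also have "\<dots> = M2 / 2" using e3 by simp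
    finally show ?thesis .
  qed
  have "\<exists>\<xi>\<in>{b..a}. (g a - g z) / (a - z) - (g b - g z) / (b - z) = \<phi>' \<xi> * (a - b)"
    by (rule mvt_real[of b a "\<lambda>v. (g v - g z) / (v - z)", simplified]) (use assms der in auto)
  then obtain \<xi> where xi: "\<xi> \<in> {b..a}" "(g a - g z) / (a - z) - (g b - g z) / (b - z) = \<phi>' \<xi> * (a - b)"
    by blast
  have "\<bar>\<phi>' \<xi> * (a - b)\<bar> \<le> M2 / 2 * (a - b)"
    using bd[OF xi(1)] assms(4) by (simp add: abs_mult mult_right_mono)
  then show ?thesis using xi(2) by simp
qed

end


lemma alt_dec:
  fixes t :: "nat \<Rightarrow> real"
  assumes "\<And>i. lo \<le> i \<Longrightarrow> i < lo + d \<Longrightarrow> t (Suc i) \<le> t i"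
    and "\<And>i. lo \<le> i \<Longrightarrow> i \<le> lo + d \<Longrightarrow> 0 \<le> t i"
  shows "0 \<le> (-1)^lo * (\<Sum>i=lo..lo+d. (-1)^i * t i) \<and> (-1)^lo * (\<Sum>i=lo..lo+d. (-1)^i * t i) \<le> t lo
     \<and> (0 < d \<longrightarrow> t lo - t (Suc lo) \<le> (-1)^lo * (\<Sum>i=lo..lo+d. (-1)^i * t i))"
  using assms
proof (induction d arbitrary: lo)
  case 0
  then show ?case by (simp flip: power_add add: power2_eq_square[symmetric] mult_2[symmetric])
next
  case (Suc d)
  define S where "S = (-1::real)^(Suc lo) * (\<Sum>i=Suc lo..Suc lo+d. (-1)^i * t i)"
  have IH: "0 \<le> S \<and> S \<le> t (Suc lo)"
    using Suc.IH[of "Suc lo"] Suc.prems unfolding S_def by auto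
  have "(\<Sum>i=lo..lo+Suc d. (-1)^i * t i) = (-1)^lo * t lo + (\<Sum>i=Suc lo..Suc lo+d. (-1)^i * t i)"
    by (subst sum.atLeast_Suc_atMost) auto
  then have eq: "(-1)^lo * (\<Sum>i=lo..lo+Suc d. (-1)^i * t i) = t lo - S"
    unfolding S_def by (simp add: algebra_simps flip: power_add)
  have "t (Suc lo) \<le> t lo" using Suc.prems(1)[of lo] by simp
  then show ?case unfolding eq using IH by auto
qed

lemma alt_inc:
  fixes t :: "nat \<Rightarrow> real"
  assumes "\<And>i. lo \<le> i \<Longrightarrow> i < lo + d \<Longrightarrow> t i \<le> t (Suc i)"
    and "\<And>i. lo \<le> i \<Longrightarrow> i \<le> lo + d \<Longrightarrow> 0 \<le> t i"
  shows "0 \<le> (-1)^(lo+d) * (\<Sum>i=lo..lo+d. (-1)^i * t i) \<and> (-1)^(lo+d) * (\<Sum>i=lo..lo+d. (-1)^i * t i) \<le> t (lo+d)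
     \<and> (0 < d \<longrightarrow> t (lo+d) - t (lo + d - 1) \<le> (-1)^(lo+d) * (\<Sum>i=lo..lo+d. (-1)^i * t i))"
  using assms
proof (induction d)
  case 0
  then show ?case by (simp flip: power_add add: power2_eq_square[symmetric] mult_2[symmetric])
next
  case (Suc d)
  define S where "S = (-1::real)^(lo+d) * (\<Sum>i=lo..lo+d. (-1)^i * t i)"
  have IH: "0 \<le> S \<and> S \<le> t (lo+d)"
    using Suc.IH Suc.prems unfolding S_def by auto
  have "(\<Sum>i=lo..lo+Suc d. (-1)^i * t i) = (\<Sum>i=lo..lo+d. (-1)^i * t i) + (-1)^(Suc (lo+d)) * t (Suc (lo+d))"
    by simp
  then have eq: "(-1)^(lo + Suc d) * (\<Sum>i=lo..lo+Suc d. (-1)^i * t i) = t (lo + Suc d) - S"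
    unfolding S_def by (simp add: algebra_simps flip: power_add)
  have "t (lo+d) \<le> t (lo + Suc d)" using Suc.prems(1)[of "lo+d"] by simp
  then show ?case unfolding eq using IH by auto
qed

lemma dec_mono:
  fixes x :: "nat \<Rightarrow> real"
  assumes "\<And>i. i < n \<Longrightarrow> x (Suc i) < x i" "i < j" "j \<le> n"
  shows "x j < x i"
  using assms(2,3)
proof (induction j)
  case 0 then show ?case by simp
next
  case (Suc j)
  have "x (Suc j) < x j" using assms(1) Suc.prems by simp
  then show ?case using Suc by (cases "i = j") auto
qed

lemma dec_mono_le:
  fixes x :: "nat \<Rightarrow> real"
  assumes "\<And>i. i < n \<Longrightarrow> x (Suc i) < x i" "i \<le> j" "j \<le> n"
  shows "x j \<le> x i"
  using dec_mono[of n x i j] assms by (cases "i = j") (auto intro: less_imp_le)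


lemma key_ineq:
  fixes p g c K :: real
  assumes "0 < p" "0 < g" "p \<le> c" "c * (c + g) \<le> K * g"
  shows "1 \<le> K * (1 / p - 1 / (p + g))"
proof -
  have e: "1 / p - 1 / (p + g) = g / (p * (p + g))" using assms(1,2) by (simp add: field_simps)
  have "p * (p + g) \<le> c * (c + g)" using assms(1,2,3) by (intro mult_mono) auto
  then have "p * (p + g) \<le> K * g" using assms(4) by linarith
  moreover have "p * (p + g) > 0" using assms(1,2) by simp
  ultimately show ?thesis unfolding e by (simp add: le_divide_eq)
qed

lemma neg_div: "(c::real) / (a - b) = - (c * (1 / (b - a)))"
proof -
  have "a - b = - (b - a)" by simp
  then show ?thesis by (metis divide_minus_right times_divide_eq_right mult.right_neutral)
qed

lemma denom_bound:
  fixes x :: "nat \<Rightarrow> real" and \<sigma> R z :: real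
  assumes dec: "\<And>i. i < n \<Longrightarrow> x (Suc i) < x i"
    and n1: "1 \<le> n"
    and G1: "\<And>i. i < n \<Longrightarrow> x i - x (Suc i) \<le> 2 * \<sigma>"
    and G2a: "\<And>i. 1 \<le> i \<Longrightarrow> i < n \<Longrightarrow> x i - x (Suc i) \<le> R * (x (i - 1) - x i)"
    and G2b: "\<And>i. Suc i < n \<Longrightarrow> x i - x (Suc i) \<le> R * (x (Suc i) - x (Suc (Suc i)))"
    and E0a: "1 - x 0 \<le> 2 * \<sigma>" and E0b: "1 - x 0 \<le> R * (x 0 - x 1)"
    and Ena: "x n + 1 \<le> 2 * \<sigma>" and Enb: "x n + 1 \<le> R * (x (n - 1) - x n)"
    and z: "-1 \<le> z" "z \<le> 1" "\<And>i. i \<le> n \<Longrightarrow> z \<noteq> x i"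
    and R0: "0 \<le> R" and s0: "0 \<le> \<sigma>"
  shows "1 \<le> 2 * \<sigma> * (1 + R) * \<bar>\<Sum>i\<le>n. (-1)^i / (z - x i)\<bar>"
proof -
  define K where "K = 2 * \<sigma> * (1 + R)"
  have K2: "2 * \<sigma> \<le> K" unfolding K_def using R0 s0 by (simp add: algebra_simps)
  have mono: "x j < x i" if "i < j" "j \<le> n" for i j using dec_mono[of n x i j] dec that by blast
  have sumeq: "(\<Sum>i\<le>n. (-1)^i / (z - x i)) = (\<Sum>i=0..0+n. (-1)^i * (1 / (z - x i)))"
    by (simp add: atMost_atLeast0)
  consider (A) "x 0 < z" | (B) "z < x n" | (C) "x n < z \<and> z < x 0"
    using z(3)[of 0] z(3)[of n] by fastforce
  then show ?thesis
  proof cases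
    case A
    define t where "t i = 1 / (z - x i)" for i
    have pos: "0 < z - x i" if "i \<le> n" for i
      using A mono[of 0 i] that by (cases "i = 0") auto
    have "0 \<le> (-1)^0 * (\<Sum>i=0..0+n. (-1)^i * t i) \<and> (0 < n \<longrightarrow> t 0 - t (Suc 0) \<le> (-1)^0 * (\<Sum>i=0..0+n. (-1)^i * t i))"
    proof -
      have "t (Suc i) \<le> t i" if "i < n" for i
        unfolding t_def using pos[of i] pos[of "Suc i"] dec[OF that] that
        by (intro divide_left_mono mult_pos_pos) auto
      moreover have "0 \<le> t i" if "i \<le> n" for i unfolding t_def using pos[OF that] by simp
      ultimately show ?thesis using alt_dec[of 0 n t] by auto
    qed
    then have D: "1 / (z - x 0) - 1 / (z - x 1) \<le> \<bar>\<Sum>i\<le>n. (-1)^i / (z - x i)\<bar>"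
      using n1 unfolding sumeq t_def by auto
    have "1 \<le> K * (1 / (z - x 0) - 1 / ((z - x 0) + (x 0 - x 1)))"
    proof (rule key_ineq[where c = "1 - x 0"])
      show "0 < z - x 0" using A by simp
      show "0 < x 0 - x 1" using dec[of 0] n1 by simp
      show "z - x 0 \<le> 1 - x 0" using z by simp
      have "1 - x 0 + (x 0 - x 1) \<le> (1 + R) * (x 0 - x 1)" using E0b by (simp add: algebra_simps)
      then have "(1 - x 0) * (1 - x 0 + (x 0 - x 1)) \<le> (2 * \<sigma>) * ((1 + R) * (x 0 - x 1))"
        by (intro mult_mono E0a) (use A z dec[of 0] n1 s0 in auto)
      then show "(1 - x 0) * (1 - x 0 + (x 0 - x 1)) \<le> K * (x 0 - x 1)" unfolding K_def by (simp add: algebra_simps)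
    qed
    also have "\<dots> \<le> K * \<bar>\<Sum>i\<le>n. (-1)^i / (z - x i)\<bar>"
      using D K2 s0 by (intro mult_left_mono) auto
    finally show ?thesis unfolding K_def .
  next
    case B
    define t where "t i = 1 / (x i - z)" for i
    have pos: "0 < x i - z" if "i \<le> n" for i
      using B mono[of i n] that by (cases "i = n") auto
    have sumeq2: "(\<Sum>i\<le>n. (-1)^i / (z - x i)) = - (\<Sum>i=0..0+n. (-1)^i * t i)"
      unfolding atMost_atLeast0 t_def sum_negf[symmetric] add_0
      by (rule sum.cong[OF refl], rule neg_div)
    have "0 < n \<longrightarrow> t (0+n) - t (0 + n - 1) \<le> (-1)^(0+n) * (\<Sum>i=0..0+n. (-1)^i * t i)"
    proof -
      have "t i \<le> t (Suc i)" if "i < n" for i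
        unfolding t_def using pos[of i] pos[of "Suc i"] dec[OF that] that
        by (intro divide_left_mono mult_pos_pos) auto
      moreover have "0 \<le> t i" if "i \<le> n" for i unfolding t_def using pos[OF that] by simp
      ultimately show ?thesis using alt_inc[of 0 n t] by auto
    qed
    then have "t n - t (n - 1) \<le> (-1)^n * (\<Sum>i=0..0+n. (-1)^i * t i)" using n1 by simp
    moreover have "(-1::real)^n * (\<Sum>i=0..0+n. (-1)^i * t i) \<le> \<bar>(-1)^n * (\<Sum>i=0..0+n. (-1)^i * t i)\<bar>"
      by (rule abs_ge_self)
    moreover have "\<bar>(-1::real)^n * (\<Sum>i=0..0+n. (-1)^i * t i)\<bar> = \<bar>\<Sum>i=0..0+n. (-1)^i * t i\<bar>"
      by (simp add: abs_mult power_abs)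
    ultimately have "t n - t (n - 1) \<le> \<bar>\<Sum>i=0..0+n. (-1)^i * t i\<bar>" by linarith
    then have D: "1 / (x n - z) - 1 / (x (n - 1) - z) \<le> \<bar>\<Sum>i\<le>n. (-1)^i / (z - x i)\<bar>"
      unfolding sumeq2 t_def by simp
    have "1 \<le> K * (1 / (x n - z) - 1 / ((x n - z) + (x (n - 1) - x n)))"
    proof (rule key_ineq[where c = "x n + 1"])
      show "0 < x n - z" using B by simp
      show "0 < x (n - 1) - x n" using dec[of "n - 1"] n1 by simp
      show "x n - z \<le> x n + 1" using z by simp
      have "x n + 1 + (x (n - 1) - x n) \<le> (1 + R) * (x (n - 1) - x n)" using Enb by (simp add: algebra_simps)
      then have "(x n + 1) * (x n + 1 + (x (n - 1) - x n)) \<le> (2 * \<sigma>) * ((1 + R) * (x (n - 1) - x n))"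
        by (intro mult_mono Ena) (use B z dec[of "n - 1"] n1 s0 in auto)
      then show "(x n + 1) * (x n + 1 + (x (n - 1) - x n)) \<le> K * (x (n - 1) - x n)" unfolding K_def by (simp add: algebra_simps)
    qed
    also have "\<dots> \<le> K * \<bar>\<Sum>i\<le>n. (-1)^i / (z - x i)\<bar>"
      using D K2 s0 by (intro mult_left_mono) auto
    finally show ?thesis unfolding K_def .
  next
    case C
    define S where "S = {i. i \<le> n \<and> z < x i}"
    define k where "k = Max S"
    have finS: "finite S" unfolding S_def by simp
    have "0 \<in> S" unfolding S_def using C by simp
    then have kS: "k \<in> S" unfolding k_def using finS Max_in by blast
    then have kn: "k \<le> n" and zk: "z < x k" unfolding S_def by auto
    have kn': "k < n" using kn zk C by (cases "k = n") auto
    have "\<not> z < x (Suc k)"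
    proof
      assume "z < x (Suc k)"
      then have "Suc k \<in> S" unfolding S_def using kn' by simp
      then have "Suc k \<le> k" unfolding k_def using finS Max_ge by blast
      then show False by simp
    qed
    moreover have "z \<noteq> x (Suc k)" using z(3)[of "Suc k"] kn' by simp
    ultimately have zk1: "x (Suc k) < z" by simp
    define p where "p = x k - z"
    define q where "q = z - x (Suc k)"
    have p0: "0 < p" and q0: "0 < q" unfolding p_def q_def using zk zk1 by auto
    have h2: "p + q \<le> 2 * \<sigma>" unfolding p_def q_def using G1[OF kn'] by simp
    define tL where "tL i = 1 / (x i - z)" for i
    define tR where "tR i = 1 / (z - x i)" for i
    define d where "d = n - Suc k"
    have nd: "Suc k + d = n" unfolding d_def using kn' by simp
    define SL where "SL = (\<Sum>i=0..0+k. (-1)^i * tL i)"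
    define SR where "SR = (\<Sum>i=Suc k..Suc k+d. (-1)^i * tR i)"
    define A where "A = (-1)^(0+k) * SL"
    define B where "B = (-1)^(Suc k) * SR"
    have posL: "0 < x i - z" if "i \<le> k" for i
      using dec_mono_le[of n x i k] dec that kn zk by fastforce
    have posR: "0 < z - x i" if "Suc k \<le> i" "i \<le> n" for i
      using dec_mono_le[of n x "Suc k" i] dec that zk1 by fastforce
    have Aprop: "0 \<le> A \<and> A \<le> tL (0+k) \<and> (0 < k \<longrightarrow> tL (0+k) - tL (0+k-1) \<le> A)"
    proof -
      have "tL i \<le> tL (Suc i)" if "i < k" for i
        unfolding tL_def using posL[of i] posL[of "Suc i"] dec[of i] that kn'
        by (intro divide_left_mono mult_pos_pos) auto
      moreover have "0 \<le> tL i" if "i \<le> k" for i unfolding tL_def using posL[OF that] by simp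
      ultimately show ?thesis unfolding A_def SL_def using alt_inc[of 0 k tL] by auto
    qed
    have Bprop: "0 \<le> B \<and> B \<le> tR (Suc k) \<and> (0 < d \<longrightarrow> tR (Suc k) - tR (Suc (Suc k)) \<le> B)"
    proof -
      have "tR (Suc i) \<le> tR i" if "Suc k \<le> i" "i < Suc k + d" for i
        unfolding tR_def using posR[of i] posR[of "Suc i"] dec[of i] that nd
        by (intro divide_left_mono mult_pos_pos) auto
      moreover have "0 \<le> tR i" if "Suc k \<le> i" "i \<le> Suc k + d" for i
        unfolding tR_def using posR[OF that(1)] that nd by simp
      ultimately show ?thesis unfolding B_def SR_def using alt_dec[of "Suc k" d tR] by auto
    qed
    have A0: "A = tL 0" if "k = 0" unfolding A_def SL_def using that by simp
    have B0: "B = tR (Suc k)" if "d = 0" unfolding B_def SR_def using that by simp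
    have split: "{..n} = {0..0+k} \<union> {Suc k..Suc k+d}" using nd by auto
    have "(\<Sum>i\<le>n. (-1)^i / (z - x i)) = (\<Sum>i=0..0+k. (-1)^i / (z - x i)) + (\<Sum>i=Suc k..Suc k+d. (-1)^i / (z - x i))"
      unfolding split by (rule sum.union_disjoint) auto
    also have "(\<Sum>i=0..0+k. (-1)^i / (z - x i)) = - SL"
      unfolding SL_def tL_def sum_negf[symmetric] by (rule sum.cong[OF refl], rule neg_div)
    also have "(\<Sum>i=Suc k..Suc k+d. (-1)^i / (z - x i)) = SR"
      unfolding SR_def tR_def by simp
    finally have eqD: "(\<Sum>i\<le>n. (-1)^i / (z - x i)) = - SL + SR" .
    have "(-1)^(Suc k) * (\<Sum>i\<le>n. (-1)^i / (z - x i)) = A + B"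
      unfolding eqD A_def B_def by (simp add: algebra_simps)
    then have absD: "\<bar>\<Sum>i\<le>n. (-1)^i / (z - x i)\<bar> = A + B"
    proof -
      have "\<bar>(-1::real)^(Suc k) * (\<Sum>i\<le>n. (-1)^i / (z - x i))\<bar> = \<bar>\<Sum>i\<le>n. (-1)^i / (z - x i)\<bar>"
        by (simp add: abs_mult power_abs)
      moreover have "\<bar>A + B\<bar> = A + B" using Aprop Bprop by simp
      ultimately show ?thesis using \<open>(-1)^(Suc k) * _ = A + B\<close> by simp
    qed
    have sK: "\<sigma> \<le> K" using K2 s0 by simp
    have "1 \<le> K * (A + B)"
    proof (cases "p \<le> q")
      case True
      have pc: "p \<le> (p + q) / 2" using True by simp
      show ?thesis
      proof (cases "k = 0")
        case True
        have "1 \<le> K * (1 / p)" using pc h2 sK p0 by (simp add: le_divide_eq)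
        also have "\<dots> \<le> K * (A + B)" using A0[OF True] Bprop sK s0 unfolding tL_def p_def
          by (intro mult_left_mono) (auto simp: True)
        finally show ?thesis .
      next
        case False
        define gg where "gg = x (k - 1) - x k"
        have g0: "0 < gg" unfolding gg_def using dec[of "k - 1"] False kn' by simp
        have hR: "p + q \<le> R * gg" unfolding gg_def p_def q_def using G2a[of k] False kn' by simp
        have "1 \<le> K * (1 / p - 1 / (p + gg))"
        proof (rule key_ineq[OF p0 g0 pc])
          have Rg: "0 \<le> R * gg" using R0 g0 by simp
          have "(p + q) / 2 + gg \<le> 2 * gg + 2 * (R * gg)" using hR g0 Rg by argo
          also have "2 * gg + 2 * (R * gg) = 2 * ((1 + R) * gg)" by (simp add: algebra_simps)
          finally have "(p + q) / 2 + gg \<le> 2 * ((1 + R) * gg)" .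
          then have "(p + q) / 2 * ((p + q) / 2 + gg) \<le> \<sigma> * (2 * ((1 + R) * gg))"
            by (intro mult_mono) (use h2 p0 q0 g0 s0 R0 in auto)
          then show "(p + q) / 2 * ((p + q) / 2 + gg) \<le> K * gg" unfolding K_def by (simp add: algebra_simps)
        qed
        also have "\<dots> \<le> K * (A + B)"
        proof -
          have "tL (0+k) - tL (0+k-1) \<le> A" using Aprop False by simp
          moreover have "tL (0+k) = 1 / p" "tL (0+k-1) = 1 / (p + gg)"
            unfolding tL_def p_def gg_def by simp_all
          ultimately show ?thesis using Bprop sK s0 by (intro mult_left_mono) auto
        qed
        finally show ?thesis .
      qed
    next
      case False
      have qc: "q \<le> (p + q) / 2" using False by simp
      show ?thesis
      proof (cases "d = 0")
        case True
        have "1 \<le> K * (1 / q)" using qc h2 sK q0 by (simp add: le_divide_eq)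
        also have "\<dots> \<le> K * (A + B)" using B0[OF True] Aprop sK s0 unfolding tR_def q_def
          by (intro mult_left_mono) auto
        finally show ?thesis .
      next
        case False
        define gg where "gg = x (Suc k) - x (Suc (Suc k))"
        have sk: "Suc k < n" using False nd by simp
        have g0: "0 < gg" unfolding gg_def using dec[of "Suc k"] sk by simp
        have hR: "p + q \<le> R * gg" unfolding gg_def p_def q_def using G2b[OF sk] by simp
        have "1 \<le> K * (1 / q - 1 / (q + gg))"
        proof (rule key_ineq[OF q0 g0 qc])
          have Rg: "0 \<le> R * gg" using R0 g0 by simp
          have "(p + q) / 2 + gg \<le> 2 * gg + 2 * (R * gg)" using hR g0 Rg by argo
          also have "2 * gg + 2 * (R * gg) = 2 * ((1 + R) * gg)" by (simp add: algebra_simps)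
          finally have "(p + q) / 2 + gg \<le> 2 * ((1 + R) * gg)" .
          then have "(p + q) / 2 * ((p + q) / 2 + gg) \<le> \<sigma> * (2 * ((1 + R) * gg))"
            by (intro mult_mono) (use h2 p0 q0 g0 s0 R0 in auto)
          then show "(p + q) / 2 * ((p + q) / 2 + gg) \<le> K * gg" unfolding K_def by (simp add: algebra_simps)
        qed
        also have "\<dots> \<le> K * (A + B)"
        proof -
          have "tR (Suc k) - tR (Suc (Suc k)) \<le> B" using Bprop False by simp
          moreover have "tR (Suc k) = 1 / q" "tR (Suc (Suc k)) = 1 / (q + gg)"
            unfolding tR_def q_def gg_def by simp_all
          ultimately show ?thesis using Aprop sK s0 by (intro mult_left_mono) auto
        qed
        finally show ?thesis .
      qed
    qed
    then show ?thesis unfolding absD K_def .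
  qed
qed


lemma jordan:
  fixes x :: real assumes "0 \<le> x" "x \<le> pi / 2"
  shows "2 * x / pi \<le> sin x"
proof -
  have cv: "convex_on {0..pi/2} (\<lambda>x. - sin x)"
  proof (rule convex_on_realI[where f' = "\<lambda>x. - cos x"])
    show "connected {0..pi/2::real}" by simp
    show "((\<lambda>x. - sin x) has_real_derivative - cos x) (at x)" for x :: real
      by (auto intro!: derivative_eq_intros)
    show "- cos x \<le> - cos y" if "x \<in> {0..pi/2}" "y \<in> {0..pi/2}" "x \<le> y" for x y :: real
      using cos_monotone_0_pi_le[of x y] that by auto
  qed
  define t where "t = 2 * x / pi"
  have t0: "0 \<le> t" "t \<le> 1" unfolding t_def using assms pi_gt_zero by (auto simp: field_simps)
  have "- sin ((1 - t) *\<^sub>R 0 + t *\<^sub>R (pi/2)) \<le> (1 - t) * (- sin 0) + t * (- sin (pi/2))"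
    by (rule convex_onD[OF cv]) (use t0 pi_gt_zero in auto)
  moreover have "(1 - t) *\<^sub>R 0 + t *\<^sub>R (pi/2) = x" unfolding t_def by simp
  ultimately show ?thesis unfolding t_def by simp
qed

lemma sin_diff_bound:
  fixes \<beta> \<gamma> \<delta> :: real and s :: nat
  assumes "0 \<le> \<beta>" "\<beta> \<le> \<gamma>" "\<gamma> \<le> pi" "\<gamma> - \<beta> \<le> (real s + 1) * \<delta>" "(real s + 1) * \<delta> \<le> pi"
  shows "cos \<beta> - cos \<gamma> \<le> 2 * sin ((real s + 1) * \<delta> / 2)"
proof -
  have e: "cos \<beta> - cos \<gamma> = 2 * sin ((\<beta> + \<gamma>) / 2) * sin ((\<gamma> - \<beta>) / 2)" by (rule cos_diff_cos)
  have s1: "sin ((\<beta> + \<gamma>) / 2) \<le> 1" by simp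
  have s2: "0 \<le> sin ((\<gamma> - \<beta>) / 2)" by (rule sin_ge_zero) (use assms in auto)
  have s3: "sin ((\<gamma> - \<beta>) / 2) \<le> sin ((real s + 1) * \<delta> / 2)"
    by (rule sin_monotone_2pi_le) (use assms pi_gt_zero in auto)
  have "sin ((\<beta> + \<gamma>) / 2) * sin ((\<gamma> - \<beta>) / 2) \<le> 1 * sin ((real s + 1) * \<delta> / 2)"
    by (rule mult_mono) (use s1 s2 s3 in auto)
  then show ?thesis unfolding e by simp
qed

lemma gap_ratio:
  fixes \<alpha> \<beta> \<gamma> \<delta> :: real and s :: nat
  assumes "0 \<le> \<alpha>" "\<alpha> + \<delta> \<le> \<beta>" "\<beta> \<le> \<gamma>" "\<gamma> - \<beta> \<le> (real s + 1) * \<delta>" "\<gamma> \<le> pi" "0 < \<delta>"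
  shows "cos \<beta> - cos \<gamma> \<le> (real s + 1) * (real s + 3) * pi^2 / 4 * (cos \<alpha> - cos \<beta>)"
proof -
  define v where "v = \<beta> - \<delta> / 2"
  define u where "u = (\<beta> + \<gamma>) / 2"
  define w where "w = (\<gamma> - \<beta>) / 2"
  have gl: "cos (\<beta> - \<delta>) \<le> cos \<alpha>"
    by (rule cos_monotone_0_pi_le) (use assms in auto)
  have ge: "cos (\<beta> - \<delta>) - cos \<beta> = 2 * sin v * sin (\<delta> / 2)"
    unfolding v_def cos_diff_cos by (simp add: field_simps)
  have he: "cos \<beta> - cos \<gamma> = 2 * sin u * sin w" unfolding u_def w_def by (rule cos_diff_cos)
  have dpi: "\<delta> \<le> pi" using assms by linarith
  have sd: "\<delta> / pi \<le> sin (\<delta> / 2)" using jordan[of "\<delta> / 2"] assms dpi by simp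
  have w0: "0 \<le> sin w" unfolding w_def by (rule sin_ge_zero) (use assms in auto)
  have sw: "sin w \<le> (real s + 1) * (pi / 2) * sin (\<delta> / 2)"
  proof -
    have "sin w \<le> w" unfolding w_def by (rule sin_x_le_x) (use assms in auto)
    also have "w \<le> (real s + 1) * \<delta> / 2" unfolding w_def using assms by simp
    also have "(real s + 1) * \<delta> / 2 = (real s + 1) * (pi / 2) * (\<delta> / pi)" by simp
    also have "\<dots> \<le> (real s + 1) * (pi / 2) * sin (\<delta> / 2)"
      by (rule mult_left_mono[OF sd]) simp
    finally show ?thesis .
  qed
  have u0: "0 \<le> sin u" unfolding u_def by (rule sin_ge_zero) (use assms in auto)
  have v0: "0 \<le> sin v" unfolding v_def by (rule sin_ge_zero) (use assms in auto)
  have su: "sin u \<le> (real s + 3) * (pi / 2) * sin v"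
  proof (cases "v \<le> pi / 2")
    case True
    have "sin u \<le> u" unfolding u_def by (rule sin_x_le_x) (use assms in auto)
    also have "u \<le> (real s + 3) * v"
    proof -
      have a: "u \<le> v + (real s + 2) * (\<delta> / 2)" unfolding u_def v_def using assms by (simp add: algebra_simps)
      have b: "(real s + 2) * (\<delta> / 2) \<le> (real s + 2) * v"
        by (rule mult_left_mono) (use assms in \<open>auto simp: v_def\<close>)
      have c: "v + (real s + 2) * v = (real s + 3) * v" by (simp add: algebra_simps)
      show ?thesis using a b c by linarith
    qed
    also have "(real s + 3) * v = (real s + 3) * (pi / 2) * (2 * v / pi)" by simp
    also have "\<dots> \<le> (real s + 3) * (pi / 2) * sin v"
      by (rule mult_left_mono[OF jordan]) (use True assms in \<open>auto simp: v_def\<close>)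
    finally show ?thesis .
  next
    case False
    have "sin u = sin (pi - u)" by simp
    also have "\<dots> \<le> pi - u" by (rule sin_x_le_x) (use assms in \<open>auto simp: u_def\<close>)
    also have "\<dots> \<le> pi - v" unfolding u_def v_def using assms by argo
    also have "pi - v = (pi / 2) * (2 * (pi - v) / pi)" by simp
    also have "\<dots> \<le> (pi / 2) * sin (pi - v)"
      by (rule mult_left_mono[OF jordan]) (use False assms in \<open>auto simp: v_def\<close>)
    also have "\<dots> = 1 * (pi / 2) * sin v" by simp
    also have "\<dots> \<le> (real s + 3) * (pi / 2) * sin v"
      by (rule mult_right_mono[OF mult_right_mono]) (use v0 in auto)
    finally show ?thesis .
  qed
  have "cos \<beta> - cos \<gamma> = 2 * (sin u * sin w)" unfolding he by simp
  also have "\<dots> \<le> 2 * (((real s + 3) * (pi / 2) * sin v) * ((real s + 1) * (pi / 2) * sin (\<delta> / 2)))"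
    by (intro mult_left_mono mult_mono su sw) (use u0 w0 v0 in auto)
  also have "\<dots> = (real s + 1) * (real s + 3) * pi^2 / 4 * (2 * sin v * sin (\<delta> / 2))"
    by (simp add: power2_eq_square algebra_simps)
  also have "\<dots> \<le> (real s + 1) * (real s + 3) * pi^2 / 4 * (cos \<alpha> - cos \<beta>)"
    by (rule mult_left_mono) (use gl ge in auto)
  finally show ?thesis .
qed


context G begin

lemma M2_nonneg: "0 \<le> M2" using bM2[of 0] by simp
lemma M1_nonneg: "0 \<le> M1" using bM1[of 0] by simp

lemma num_bound:
  fixes x :: "nat \<Rightarrow> real" and z :: real
  assumes dec: "\<And>i. i < n \<Longrightarrow> x (Suc i) < x i"
    and xI: "\<And>i. i \<le> n \<Longrightarrow> x i \<in> {-1..1}"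
    and zI: "z \<in> {-1..1}" and zn: "\<And>i. i \<le> n \<Longrightarrow> z \<noteq> x i" and n1: "1 \<le> n"
  shows "\<bar>\<Sum>i\<le>n. (-1)^i * ((g (x i) - g z) / (x i - z))\<bar> \<le> (if odd n then M2 else M2 + M1)"
proof -
  define \<phi> where "\<phi> i = (g (x i) - g z) / (x i - z)" for i
  have P: "\<bar>\<Sum>i<2*m+2. (-1)^i * \<phi> i\<bar> \<le> M2 / 2 * (x 0 - x (2*m+1))" if "2*m+1 \<le> n" for m
    using that
  proof (induction m)
    case 0
    have "\<bar>\<phi> 0 - \<phi> 1\<bar> \<le> M2 / 2 * (x 0 - x 1)"
      unfolding \<phi>_def by (rule pair_bound) (use xI zI zn dec[of 0] 0 in auto)
    then show ?case by (simp add: numeral_2_eq_2)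
  next
    case (Suc m)
    have e: "2 * Suc m + 2 = Suc (Suc (2*m+2))" by simp
    have s: "(\<Sum>i<2 * Suc m + 2. (-1)^i * \<phi> i) = (\<Sum>i<2*m+2. (-1)^i * \<phi> i) + (\<phi> (2*m+2) - \<phi> (Suc (2*m+2)))"
      unfolding e by simp
    have IH: "\<bar>\<Sum>i<2*m+2. (-1)^i * \<phi> i\<bar> \<le> M2 / 2 * (x 0 - x (2*m+1))" using Suc by simp
    have pb: "\<bar>\<phi> (2*m+2) - \<phi> (Suc (2*m+2))\<bar> \<le> M2 / 2 * (x (2*m+2) - x (Suc (2*m+2)))"
      unfolding \<phi>_def by (rule pair_bound) (use xI zI zn dec[of "2*m+2"] Suc.prems in auto)
    have m1: "x (2*m+2) \<le> x (2*m+1)" using dec[of "2*m+1"] Suc.prems by simp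
    have "M2 / 2 * (x 0 - x (2*m+1)) + M2 / 2 * (x (2*m+2) - x (Suc (2*m+2))) \<le> M2 / 2 * (x 0 - x (2 * Suc m + 1))"
    proof -
      have "M2 / 2 * (x 0 - x (2*m+1)) + M2 / 2 * (x (2*m+2) - x (Suc (2*m+2)))
          = M2 / 2 * ((x 0 - x (2*m+1)) + (x (2*m+2) - x (Suc (2*m+2))))" by (simp add: algebra_simps)
      also have "\<dots> \<le> M2 / 2 * (x 0 - x (2 * Suc m + 1))"
        by (rule mult_left_mono) (use m1 M2_nonneg in auto)
      finally show ?thesis .
    qed
    then show ?case unfolding s using IH pb abs_triangle_ineq[of "\<Sum>i<2*m+2. (-1)^i * \<phi> i" "\<phi> (2*m+2) - \<phi> (Suc (2*m+2))"]
      by linarith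
  qed
  have x0: "x 0 \<le> 1" and xn: "-1 \<le> x n" using xI[of 0] xI[of n] by auto
  show ?thesis
  proof (cases "odd n")
    case True
    then obtain m where m: "n = 2*m+1" by (rule oddE)
    have sn: "Suc n = 2*m+2" using m by simp
    have "(\<Sum>i\<le>n. (-1)^i * \<phi> i) = (\<Sum>i<2*m+2. (-1)^i * \<phi> i)"
      unfolding sn[symmetric] by (simp only: lessThan_Suc_atMost)
    then have "\<bar>\<Sum>i\<le>n. (-1)^i * \<phi> i\<bar> \<le> M2 / 2 * (x 0 - x n)" using P[of m] m by simp
    also have "\<dots> \<le> M2 / 2 * 2" by (rule mult_left_mono) (use x0 xn M2_nonneg in auto)
    finally show ?thesis using True unfolding \<phi>_def by simp
  next
    case False
    then obtain m0 where "n = 2*m0" by (auto elim: evenE)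
    then obtain m where m: "n = 2*m+2" using n1 by (cases m0) auto
    have e: "n = Suc (Suc (2*m))" and e2: "2*m+2 = Suc (Suc (2*m))" using m by simp_all
    have "(\<Sum>i\<le>n. (-1)^i * \<phi> i) = (\<Sum>i<2*m+2. (-1)^i * \<phi> i) + (-1)^n * \<phi> n"
      unfolding e2 by (simp only: e sum.atMost_Suc lessThan_Suc_atMost)
    moreover have "(-1::real)^n = 1" using False by simp
    ultimately have "(\<Sum>i\<le>n. (-1)^i * \<phi> i) = (\<Sum>i<2*m+2. (-1)^i * \<phi> i) + \<phi> n" by simp
    moreover have "\<bar>\<Sum>i<2*m+2. (-1)^i * \<phi> i\<bar> \<le> M2 / 2 * (x 0 - x (2*m+1))" using P[of m] m by simp
    moreover have "M2 / 2 * (x 0 - x (2*m+1)) \<le> M2 / 2 * 2"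
      by (rule mult_left_mono) (use x0 xI[of "2*m+1"] M2_nonneg m in auto)
    moreover have "\<bar>\<phi> n\<bar> \<le> M1" unfolding \<phi>_def by (rule phi_bound) (use xI zI zn in auto)
    ultimately have "\<bar>\<Sum>i\<le>n. (-1)^i * \<phi> i\<bar> \<le> M2 + M1"
      using abs_triangle_ineq[of "\<Sum>i<2*m+2. (-1)^i * \<phi> i" "\<phi> n"] by linarith
    then show ?thesis using False unfolding \<phi>_def by simp
  qed
qed

lemma err_formula:
  fixes x :: "nat \<Rightarrow> real" and z :: real
  assumes zn: "\<And>i. i \<le> n \<Longrightarrow> z \<noteq> x i" and Dnz: "(\<Sum>j\<le>n. (-1)^j / (z - x j)) \<noteq> 0"
  shows "berrut x (\<lambda>i. g (x i)) n z - g z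
     = - (\<Sum>i\<le>n. (-1)^i * ((g (x i) - g z) / (x i - z))) / (\<Sum>j\<le>n. (-1)^j / (z - x j))"
    (is "_ = - ?S / ?D")
proof -
  have nex: "\<not> (\<exists>i\<le>n. z = x i)" using zn by auto
  have "berrut x (\<lambda>i. g (x i)) n z = (\<Sum>i\<le>n. ((-1)^i / (z - x i)) * g (x i)) / ?D"
    by (simp only: berrut_def if_not_P[OF nex])
  moreover have "(\<Sum>i\<le>n. ((-1)^i / (z - x i)) * g (x i)) - g z * ?D = - ?S"
  proof -
    have "(\<Sum>i\<le>n. ((-1)^i / (z - x i)) * g (x i)) - g z * ?D
        = (\<Sum>i\<le>n. ((-1)^i / (z - x i)) * g (x i) - g z * ((-1)^i / (z - x i)))"
      by (simp add: sum_subtractf sum_distrib_left)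
    also have "\<dots> = (\<Sum>i\<le>n. - ((-1)^i * ((g (x i) - g z) / (x i - z))))"
    proof (rule sum.cong[OF refl])
      fix i assume "i \<in> {..n}"
      then have ne: "z - x i \<noteq> 0" "x i - z \<noteq> 0" using zn by auto
      define w where "w = 1 / (x i - z)"
      have e1: "(-1::real)^i / (z - x i) = - ((-1)^i * w)" unfolding w_def by (rule neg_div)
      have e2: "(g (x i) - g z) / (x i - z) = (g (x i) - g z) * w" unfolding w_def by simp
      show "((-1)^i / (z - x i)) * g (x i) - g z * ((-1)^i / (z - x i)) = - ((-1)^i * ((g (x i) - g z) / (x i - z)))"
        unfolding e1 e2 by (simp add: algebra_simps)
    qed
    also have "\<dots> = - ?S" by (simp add: sum_negf)
    finally show ?thesis .
  qed
  moreover have "(\<Sum>i\<le>n. ((-1)^i / (z - x i)) * g (x i)) / ?D - g z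
      = ((\<Sum>i\<le>n. ((-1)^i / (z - x i)) * g (x i)) - g z * ?D) / ?D"
    using Dnz by (simp add: diff_divide_distrib)
  ultimately show ?thesis by simp
qed

end


lemma node_facts:
  fixes N s :: nat and F :: "nat set"
  assumes sN: "s + 2 < N" and FN: "F \<subseteq> {0..N}" and cF: "card F = N + 1 - s"
  shows "length (sorted_list_of_set F) = N - s + 1"
    and "\<And>i. i < N - s \<Longrightarrow> sorted_list_of_set F ! i < sorted_list_of_set F ! Suc i"
    and "\<And>i. i < N - s \<Longrightarrow> sorted_list_of_set F ! Suc i \<le> sorted_list_of_set F ! i + (s + 1)"
    and "sorted_list_of_set F ! 0 \<le> s"
    and "N - s \<le> sorted_list_of_set F ! (N - s)"
    and "\<And>i. i \<le> N - s \<Longrightarrow> sorted_list_of_set F ! i \<le> N"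
proof -
  define js where "js = sorted_list_of_set F"
  define n where "n = N - s"
  have fin: "finite F" using FN finite_subset by blast
  have len: "length js = n + 1" unfolding js_def n_def using fin cF sN by simp
  have setjs: "set js = F" unfolding js_def using fin by simp
  have sw: "sorted_wrt (<) js" unfolding js_def by (rule strict_sorted_list_of_set)
  have lt: "js ! i < js ! j" if "i < j" "j < length js" for i j
    using sorted_wrt_nth_less[OF sw that] .
  have le: "js ! i \<le> js ! j" if "i \<le> j" "j < length js" for i j
    using lt[of i j] that by (cases "i = j") auto
  have mem: "js ! i \<in> F" if "i < length js" for i using nth_mem[OF that] setjs by simp
  have inv: "\<exists>m<length js. js ! m = c" if "c \<in> F" for c
    using that setjs by (auto simp: in_set_conv_nth)
  have bnd: "js ! i \<le> N" if "i \<le> n" for i using mem[of i] that len FN by auto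
  show "length (sorted_list_of_set F) = N - s + 1" using len unfolding js_def n_def .
  show "sorted_list_of_set F ! i < sorted_list_of_set F ! Suc i" if "i < N - s" for i
    using lt[of i "Suc i"] that len unfolding js_def n_def by simp
  show "sorted_list_of_set F ! i \<le> N" if "i \<le> N - s" for i
    using bnd[of i] that unfolding js_def n_def by simp
  show "sorted_list_of_set F ! Suc i \<le> sorted_list_of_set F ! i + (s + 1)" if i: "i < N - s" for i
  proof -
    define a where "a = js ! i"
    define b where "b = js ! Suc i"
    have ab: "a < b" unfolding a_def b_def using lt[of i "Suc i"] i len n_def by simp
    have bN: "b \<le> N" unfolding b_def using bnd[of "Suc i"] i n_def by simp
    have sub: "F \<subseteq> {0..N} - {a<..<b}"
    proof
      fix c assume c: "c \<in> F"
      then obtain m where m: "m < length js" "js ! m = c" using inv by blast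
      have "c \<le> a \<or> b \<le> c"
      proof (cases "m \<le> i")
        case True then show ?thesis using le[of m i] m i len n_def unfolding a_def by auto
      next
        case False then show ?thesis using le[of "Suc i" m] m unfolding b_def by auto
      qed
      then show "c \<in> {0..N} - {a<..<b}" using c FN by auto
    qed
    have "card F \<le> card ({0..N} - {a<..<b})" using sub by (intro card_mono) auto
    also have "\<dots> = card {0..N} - card {a<..<b}" using bN by (intro card_Diff_subset) auto
    also have "\<dots> = Suc N - (b - Suc a)" by simp
    finally have "N + 1 - s \<le> Suc N - (b - Suc a)" using cF by simp
    then have "b \<le> a + (s + 1)" using ab bN sN by arith
    then show ?thesis unfolding a_def b_def js_def .
  qed
  show "sorted_list_of_set F ! 0 \<le> s"
  proof -
    have sub: "F \<subseteq> {js ! 0..N}"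
    proof
      fix c assume c: "c \<in> F"
      then obtain m where m: "m < length js" "js ! m = c" using inv by blast
      then show "c \<in> {js ! 0..N}" using le[of 0 m] c FN by auto
    qed
    have "card F \<le> card {js ! 0..N}" using sub by (intro card_mono) auto
    then have "N + 1 - s \<le> Suc N - js ! 0" using cF by simp
    moreover have "js ! 0 \<le> N" using bnd[of 0] by simp
    ultimately show ?thesis unfolding js_def using sN by arith
  qed
  show "N - s \<le> sorted_list_of_set F ! (N - s)"
  proof -
    have sub: "F \<subseteq> {0..js ! n}"
    proof
      fix c assume c: "c \<in> F"
      then obtain m where m: "m < length js" "js ! m = c" using inv by blast
      then show "c \<in> {0..js ! n}" using le[of m n] len by auto
    qed
    have "card F \<le> card {0..js ! n}" using sub by (intro card_mono) auto
    then have "N + 1 - s \<le> Suc (js ! n)" using cF by simp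
    then show ?thesis unfolding js_def n_def using sN by arith
  qed
qed

lemma final_div:
  fixes S d K B :: real
  assumes "0 < d" "1 \<le> K * d" "\<bar>S\<bar> \<le> B"
  shows "\<bar>S\<bar> / d \<le> B * K"
proof -
  have B0: "0 \<le> B" using assms(3) by linarith
  have "\<bar>S\<bar> / d \<le> B / d" using assms by (simp add: divide_right_mono)
  also have "B / d \<le> B * K"
  proof -
    have "B * 1 \<le> B * (K * d)" using B0 assms(2) by (intro mult_left_mono) auto
    then show ?thesis using assms(1) by (simp add: divide_le_eq algebra_simps)
  qed
  finally show ?thesis .
qed

lemma real_mult_le:
  fixes a b c :: nat and \<delta> :: real
  assumes "a \<le> b + c" "0 \<le> \<delta>"
  shows "real a * \<delta> \<le> real b * \<delta> + real c * \<delta>"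
proof -
  have "real a \<le> real b + real c" using assms(1) by linarith
  then have "real a * \<delta> \<le> (real b + real c) * \<delta>" using assms(2) by (rule mult_right_mono)
  then show ?thesis by (simp add: algebra_simps)
qed


theorem theorem8:
  fixes K N s :: nat and X :: "nat \<Rightarrow> real" and f :: "real \<Rightarrow> real"
    and g g1 g2 :: "real \<Rightarrow> real" and F :: "nat set"
  assumes "K \<ge> 1" and "s + 2 < N"
    and "g = (\<lambda>z. f (enc_u K X z))"
    and "\<forall>z\<in>{-1..1}. (g has_real_derivative g1 z) (at z within {-1..1})"
    and "\<forall>z\<in>{-1..1}. (g1 has_real_derivative g2 z) (at z within {-1..1})"
    and "continuous_on {-1..1} g2"
    and "F \<subseteq> {0..N}" and "card F = N + 1 - s"
  shows "(odd (N - s) \<longrightarrow>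
           supnorm (\<lambda>z. dec_r N s F g z - g z)
             \<le> 2 * (1 + (real s + 1) * (real s + 3) * pi^2 / 4)
                 * sin ((real s + 1) * pi / (2 * real N)) * supnorm g2)
       \<and> (even (N - s) \<longrightarrow>
           supnorm (\<lambda>z. dec_r N s F g z - g z)
             \<le> 2 * (1 + (real s + 1) * (real s + 3) * pi^2 / 4)
                 * sin ((real s + 1) * pi / (2 * real N)) * (supnorm g2 + supnorm g1))"
proof -
  note sN = assms(2) and FN = assms(7) and cF = assms(8)
  define I :: "real set" where "I = {-1..1}"
  define M1 where "M1 = supnorm g1"
  define M2 where "M2 = supnorm g2"
  define R where "R = (real s + 1) * (real s + 3) * pi^2 / 4"
  define \<sigma> where "\<sigma> = sin ((real s + 1) * pi / (2 * real N))"
  define n where "n = N - s"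
  define js where "js = sorted_list_of_set F"
  define \<delta> where "\<delta> = pi / real N"
  define \<theta> where "\<theta> i = real (js ! i) * \<delta>" for i
  define x where "x = surv_node N F"
  have Npos: "0 < real N" using sN by simp
  have d0: "0 < \<delta>" unfolding \<delta>_def using Npos by simp
  have n1: "1 \<le> n" unfolding n_def using sN by simp
  have xth: "x i = cos (\<theta> i)" for i unfolding x_def surv_node_def \<theta>_def \<delta>_def js_def by simp
  have sig: "\<sigma> = sin ((real s + 1) * \<delta> / 2)" unfolding \<sigma>_def \<delta>_def by (simp add: field_simps)
  note NF = node_facts[OF sN FN cF, folded js_def n_def]
  have th0: "0 \<le> \<theta> i" for i unfolding \<theta>_def using d0 by simp
  have thpi: "\<theta> i \<le> pi" if "i \<le> n" for i
  proof -
    have "real (js ! i) \<le> real N" using NF(6)[OF that] by simp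
    then have "real (js ! i) * \<delta> \<le> real N * \<delta>" using d0 by (intro mult_right_mono) auto
    also have "real N * \<delta> = pi" unfolding \<delta>_def using Npos by simp
    finally show ?thesis unfolding \<theta>_def .
  qed
  have thstep: "\<theta> i + \<delta> \<le> \<theta> (Suc i)" if "i < n" for i
  proof -
    have "js ! Suc i \<ge> js ! i + 1" using NF(2)[OF that] by simp
    then have "real (js ! i + 1) * \<delta> \<le> real (js ! Suc i) * \<delta> + real 0 * \<delta>"
      using real_mult_le[of "js ! i + 1" "js ! Suc i" 0 \<delta>] d0 by simp
    then show ?thesis unfolding \<theta>_def by (simp add: algebra_simps)
  qed
  have thgap: "\<theta> (Suc i) - \<theta> i \<le> (real s + 1) * \<delta>" if "i < n" for i
  proof -
    have "real (js ! Suc i) * \<delta> \<le> real (js ! i) * \<delta> + real (s + 1) * \<delta>"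
      using real_mult_le[OF NF(3)[OF that]] d0 by simp
    then show ?thesis unfolding \<theta>_def by (simp add: algebra_simps)
  qed
  have sd: "(real s + 1) * \<delta> \<le> pi"
  proof -
    have "real s + 1 \<le> real N" using sN by simp
    then have "(real s + 1) * \<delta> \<le> real N * \<delta>" using d0 by (intro mult_right_mono) auto
    also have "real N * \<delta> = pi" unfolding \<delta>_def using Npos by simp
    finally show ?thesis .
  qed
  have th0s: "\<theta> 0 \<le> (real s + 1) * \<delta>"
  proof -
    have "real (js ! 0) * \<delta> \<le> real s * \<delta> + real 1 * \<delta>"
      using real_mult_le[of "js ! 0" s 1 \<delta>] NF(4) d0 by simp
    then show ?thesis unfolding \<theta>_def by (simp add: algebra_simps)
  qed
  have thns: "pi - \<theta> n \<le> (real s + 1) * \<delta>"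
  proof -
    have "real N * \<delta> \<le> real (js ! n) * \<delta> + real (s + 1) * \<delta>"
      using real_mult_le[of N "js ! n" "s + 1" \<delta>] NF(5) d0 unfolding n_def by simp
    moreover have "real N * \<delta> = pi" unfolding \<delta>_def using Npos by simp
    ultimately show ?thesis unfolding \<theta>_def by (simp add: algebra_simps)
  qed
  have dec: "x (Suc i) < x i" if "i < n" for i
    unfolding xth using thstep[OF that] thpi[of "Suc i"] th0[of i] d0 that
    by (intro cos_monotone_0_pi) auto
  have xI: "x i \<in> I" for i unfolding I_def xth by simp
  have R0: "0 \<le> R" unfolding R_def by simp
  have s0: "0 \<le> \<sigma>" unfolding sig
  proof (rule sin_ge_zero)
    have "0 \<le> (real s + 1) * \<delta>" using d0 by simp
    then show "0 \<le> (real s + 1) * \<delta> / 2" "(real s + 1) * \<delta> / 2 \<le> pi" using sd pi_gt_zero by linarith+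
  qed
  have G1: "x i - x (Suc i) \<le> 2 * \<sigma>" if "i < n" for i
    unfolding xth sig
    by (rule sin_diff_bound) (use th0 thpi[of "Suc i"] thstep[OF that] thgap[OF that] sd d0 that in auto)
  have G2a: "x i - x (Suc i) \<le> R * (x (i - 1) - x i)" if "1 \<le> i" "i < n" for i
  proof -
    have e: "Suc (i - 1) = i" using that by simp
    show ?thesis unfolding xth R_def
      by (rule gap_ratio) (use th0 thpi[of "Suc i"] thstep[of "i - 1"] thstep[of i] thgap[of i] d0 that e in auto)
  qed
  have G2b: "x i - x (Suc i) \<le> R * (x (Suc i) - x (Suc (Suc i)))" if "Suc i < n" for i
  proof -
    have "cos (pi - \<theta> (Suc i)) - cos (pi - \<theta> i)
        \<le> R * (cos (pi - \<theta> (Suc (Suc i))) - cos (pi - \<theta> (Suc i)))"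
      unfolding R_def
      by (rule gap_ratio) (use th0 thpi[of "Suc (Suc i)"] thstep[of i] thstep[of "Suc i"] thgap[of i] d0 that in auto)
    then show ?thesis unfolding xth by simp
  qed
  have E0a: "1 - x 0 \<le> 2 * \<sigma>"
    using sin_diff_bound[of 0 "\<theta> 0" s \<delta>] th0 thpi[of 0] th0s sd unfolding xth sig by simp
  have E0b: "1 - x 0 \<le> R * (x 0 - x 1)"
  proof -
    have "cos (pi - \<theta> 0) - cos pi \<le> R * (cos (pi - \<theta> 1) - cos (pi - \<theta> 0))"
      unfolding R_def
      by (rule gap_ratio) (use th0 thpi[of 1] thstep[of 0] th0s d0 n1 in auto)
    then show ?thesis unfolding xth by simp
  qed
  have Ena: "x n + 1 \<le> 2 * \<sigma>"
    using sin_diff_bound[of "\<theta> n" pi s \<delta>] th0 thpi[of n] thns sd unfolding xth sig by simp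
  have Enb: "x n + 1 \<le> R * (x (n - 1) - x n)"
  proof -
    have e: "Suc (n - 1) = n" using n1 by simp
    have "cos (\<theta> n) - cos pi \<le> R * (cos (\<theta> (n - 1)) - cos (\<theta> n))"
      unfolding R_def
      by (rule gap_ratio) (use th0 thpi[of n] thstep[of "n - 1"] thns d0 n1 e in auto)
    then show ?thesis unfolding xth by simp
  qed
  have cg1: "continuous_on I g1" unfolding I_def
    by (rule DERIV_continuous_on) (use assms(5) in auto)
  have bdd: "bdd_above ((\<lambda>z. \<bar>h z\<bar>) ` I)" if "continuous_on I h" for h :: "real \<Rightarrow> real"
    by (intro bounded_imp_bdd_above compact_imp_bounded compact_continuous_image continuous_on_rabs that)
       (simp add: I_def)
  have bM1: "\<bar>g1 z\<bar> \<le> M1" if "z \<in> I" for z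
    unfolding M1_def supnorm_def using cSUP_upper[OF that bdd[OF cg1]] by (simp add: I_def)
  have bM2: "\<bar>g2 z\<bar> \<le> M2" if "z \<in> I" for z
    unfolding M2_def supnorm_def using cSUP_upper[OF that bdd[OF assms(6)[folded I_def]]] by (simp add: I_def)
  interpret G g g1 g2 M1 M2
    by unfold_locales (use assms(4,5) bM1 bM2 in \<open>auto simp: I_def\<close>)
  define Bd where "Bd = (if odd n then M2 else M2 + M1)"
  have Bd0: "0 \<le> Bd" unfolding Bd_def using M1_nonneg M2_nonneg by simp
  have pt: "\<bar>dec_r N s F g z - g z\<bar> \<le> Bd * (2 * \<sigma> * (1 + R))" if z: "z \<in> I" for z
  proof (cases "\<exists>i\<le>n. z = x i")
    case True
    have "x (LEAST i. i \<le> n \<and> z = x i) = z" using LeastI_ex[OF True[simplified Bex_def]] by simp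
    then have "dec_r N s F g z = g z"
      unfolding dec_r_def berrut_def using True by (simp add: x_def n_def)
    then show ?thesis using Bd0 s0 R0 by simp
  next
    case False
    then have zn: "\<And>i. i \<le> n \<Longrightarrow> z \<noteq> x i" by auto
    have DB: "1 \<le> 2 * \<sigma> * (1 + R) * \<bar>\<Sum>i\<le>n. (-1)^i / (z - x i)\<bar>"
      by (rule denom_bound[OF dec n1 G1 G2a G2b E0a E0b Ena Enb _ _ zn R0 s0]) (use z in \<open>auto simp: I_def\<close>)
    then have Dnz: "(\<Sum>i\<le>n. (-1)^i / (z - x i)) \<noteq> 0" by auto
    have "dec_r N s F g z - g z = berrut x (\<lambda>i. g (x i)) n z - g z"
      unfolding dec_r_def x_def n_def ..
    also have "\<dots> = - (\<Sum>i\<le>n. (-1)^i * ((g (x i) - g z) / (x i - z))) / (\<Sum>j\<le>n. (-1)^j / (z - x j))"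
      by (rule err_formula[OF zn Dnz])
    finally have e: "\<bar>dec_r N s F g z - g z\<bar> = \<bar>\<Sum>i\<le>n. (-1)^i * ((g (x i) - g z) / (x i - z))\<bar> / \<bar>\<Sum>j\<le>n. (-1)^j / (z - x j)\<bar>"
      by (simp add: abs_divide)
    have nb: "\<bar>\<Sum>i\<le>n. (-1)^i * ((g (x i) - g z) / (x i - z))\<bar> \<le> Bd"
      unfolding Bd_def by (rule num_bound[of n x]) (use dec xI z zn n1 in \<open>auto simp: I_def\<close>)
    show ?thesis unfolding e
      by (rule final_div) (use Dnz DB nb in \<open>auto simp: algebra_simps\<close>)
  qed
  have main: "supnorm (\<lambda>z. dec_r N s F g z - g z) \<le> Bd * (2 * \<sigma> * (1 + R))"
    unfolding supnorm_def by (rule cSUP_least) (use pt in \<open>auto simp: I_def\<close>)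
  show ?thesis
    using main unfolding Bd_def R_def \<sigma>_def M1_def M2_def n_def by (auto simp: algebra_simps)
qed


end
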